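(* Assume the Lipschitz gradient assumption, $r_1>L_x$, $r_2>L_y$, and let $\{(x^t,y^t,z^t,v^t)\}$ be generated by DS-GDA with $c,\alpha>0$, $\beta,\mu\in(0,1)$. There exists $\rho>0$, depending only on $L_x,L_y,r_1,r_2,c,\alpha,\beta,\mu$, such that for every $\epsilon\ge0$ and $t\ge0$: if $$\max\Big\{\frac{\|x^t-x^{t+1}\|}{c},\frac{\|y^t-y^t_+(z^t,v^t)\|}{\alpha},\frac{\|z^t-z^{t+1}\|}{\beta},\frac{\|v^t-v^{t+1}\|}{\mu}\Big\}\le\epsilon,$$ then $(x^{t+1},y^{t+1})$ is a $\rho\epsilon$-GS.
   Context: Let $\mathcal X\subset\mathbb R^n$, $\mathcal Y\subset\mathbb R^d$ be nonempty convex compact sets and $f:\mathbb R^n\times\mathbb R^d\to\mathbb R$ continuously differentiable. Lipschitz gradient assumption: there are $L_x,L_y>0$ such that for all $x,x'\in\mathcal X$, $y,y'\in\mathcal Y$, $\|\nabla_x f(x,y)-\nabla_x f(x',y')\|\le L_x(\|x-x'\|+\|y-y'\|)$ and $\|\nabla_y f(x,y)-\nabla_y f(x',y')\|\le L_y(\|x-x'\|+\|y-y'\|)$. $F(x,y,z,v)=f(x,y)+\frac{r_1}{2}\|x-z\|^2-\frac{r_2}{2}\|y-v\|^2$; $x(y,z,v)=\arg\min_{x\in\mathcal X}F(x,y,z,v)$. DS-GDA: given $x^0,y^0,z^0,v^0$, for $t\ge0$: $x^{t+1}=\mathrm{proj}_{\mathcal X}(x^t-c\nabla_xF(x^t,y^t,z^t,v^t))$;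 $y^{t+1}=\mathrm{proj}_{\mathcal Y}(y^t+\alpha\nabla_yF(x^{t+1},y^t,z^t,v^t))$; $z^{t+1}=z^t+\beta(x^{t+1}-z^t)$; $v^{t+1}=v^t+\mu(y^{t+1}-v^t)$. $y^t_+(z^t,v^t)=\mathrm{proj}_{\mathcal Y}(y^t+\alpha\nabla_yF(x(y^t,z^t,v^t),y^t,z^t,v^t))$. Let $N_{\mathcal X}(x)=\partial\mathbf 1_{\mathcal X}(x)$ denote the normal cone. A point $(x,y)\in\mathcal X\times\mathcal Y$ is an $\epsilon$-game stationary point ($\epsilon$-GS) if $\mathrm{dist}(0,\nabla_xf(x,y)+N_{\mathcal X}(x))\le\epsilon$ and $\mathrm{dist}(0,-\nabla_yf(x,y)+N_{\mathcal Y}(y))\le\epsilon$. *)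

theory Defs
  imports "HOL-Analysis.Analysis"
begin

definition C1_with_grads ::
  "('a::euclidean_space \<Rightarrow> 'b::euclidean_space \<Rightarrow> real) \<Rightarrow> ('a \<Rightarrow> 'b \<Rightarrow> 'a) \<Rightarrow> ('a \<Rightarrow> 'b \<Rightarrow> 'b) \<Rightarrow> bool" where
  "C1_with_grads f gx gy \<longleftrightarrow>
     (\<forall>x y. ((\<lambda>p. f (fst p) (snd p)) has_derivative
              (\<lambda>h. gx x y \<bullet> fst h + gy x y \<bullet> snd h)) (at (x, y))) \<and>
     continuous_on UNIV (\<lambda>p. gx (fst p) (snd p)) \<and>
     continuous_on UNIV (\<lambda>p. gy (fst p) (snd p))"

definition lipschitz_grads ::
  "'a::euclidean_space set \<Rightarrow> 'b::euclidean_space set \<Rightarrow> ('a \<Rightarrow> 'b \<Rightarrow> 'a) \<Rightarrow> ('a \<Rightarrow> 'b \<Rightarrow> 'b) \<Rightarrow> real \<Rightarrow> real \<Rightarrow> bool" where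
  "lipschitz_grads X Y gx gy Lx Ly \<longleftrightarrow>
     (\<forall>x\<in>X. \<forall>x'\<in>X. \<forall>y\<in>Y. \<forall>y'\<in>Y.
        norm (gx x y - gx x' y') \<le> Lx * (norm (x - x') + norm (y - y')) \<and>
        norm (gy x y - gy x' y') \<le> Ly * (norm (x - x') + norm (y - y')))"

definition Fdsgda ::
  "('a::euclidean_space \<Rightarrow> 'b::euclidean_space \<Rightarrow> real) \<Rightarrow> real \<Rightarrow> real \<Rightarrow> 'a \<Rightarrow> 'b \<Rightarrow> 'a \<Rightarrow> 'b \<Rightarrow> real" where
  "Fdsgda f r1 r2 x y z v = f x y + r1 / 2 * (norm (x - z))\<^sup>2 - r2 / 2 * (norm (y - v))\<^sup>2"

definition gradxF :: "('a::euclidean_space \<Rightarrow> 'b::euclidean_space \<Rightarrow> 'a) \<Rightarrow> real \<Rightarrow> 'a \<Rightarrow> 'b \<Rightarrow> 'a \<Rightarrow> 'a" where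
  "gradxF gx r1 x y z = gx x y + r1 *\<^sub>R (x - z)"

definition gradyF :: "('a::euclidean_space \<Rightarrow> 'b::euclidean_space \<Rightarrow> 'b) \<Rightarrow> real \<Rightarrow> 'a \<Rightarrow> 'b \<Rightarrow> 'b \<Rightarrow> 'b" where
  "gradyF gy r2 x y v = gy x y - r2 *\<^sub>R (y - v)"

text \<open>x(y,z,v) = argmin over X of F(., y, z, v) (unique when r1 > Lx).\<close>
definition xopt ::
  "'a::euclidean_space set \<Rightarrow> ('a \<Rightarrow> 'b::euclidean_space \<Rightarrow> real) \<Rightarrow> real \<Rightarrow> real \<Rightarrow> 'b \<Rightarrow> 'a \<Rightarrow> 'b \<Rightarrow> 'a" where
  "xopt X f r1 r2 y z v =
     (THE x. x \<in> X \<and> (\<forall>x'\<in>X. Fdsgda f r1 r2 x y z v \<le> Fdsgda f r1 r2 x' y z v))"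

definition dsgda_seq ::
  "'a::euclidean_space set \<Rightarrow> 'b::euclidean_space set \<Rightarrow> ('a \<Rightarrow> 'b \<Rightarrow> 'a) \<Rightarrow> ('a \<Rightarrow> 'b \<Rightarrow> 'b) \<Rightarrow>
   real \<Rightarrow> real \<Rightarrow> real \<Rightarrow> real \<Rightarrow> real \<Rightarrow> real \<Rightarrow>
   (nat \<Rightarrow> 'a) \<Rightarrow> (nat \<Rightarrow> 'b) \<Rightarrow> (nat \<Rightarrow> 'a) \<Rightarrow> (nat \<Rightarrow> 'b) \<Rightarrow> bool" where
  "dsgda_seq X Y gx gy r1 r2 c \<alpha> \<beta> \<mu> xs ys zs vs \<longleftrightarrow>
     (\<forall>t. xs (Suc t) = closest_point X (xs t - c *\<^sub>R gradxF gx r1 (xs t) (ys t) (zs t)) \<and>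
          ys (Suc t) = closest_point Y (ys t + \<alpha> *\<^sub>R gradyF gy r2 (xs (Suc t)) (ys t) (vs t)) \<and>
          zs (Suc t) = zs t + \<beta> *\<^sub>R (xs (Suc t) - zs t) \<and>
          vs (Suc t) = vs t + \<mu> *\<^sub>R (ys (Suc t) - vs t))"

definition yplus ::
  "'a::euclidean_space set \<Rightarrow> 'b::euclidean_space set \<Rightarrow> ('a \<Rightarrow> 'b \<Rightarrow> real) \<Rightarrow> ('a \<Rightarrow> 'b \<Rightarrow> 'b) \<Rightarrow>
   real \<Rightarrow> real \<Rightarrow> real \<Rightarrow> 'b \<Rightarrow> 'a \<Rightarrow> 'b \<Rightarrow> 'b" where
  "yplus X Y f gy r1 r2 \<alpha> y z v =
     closest_point Y (y + \<alpha> *\<^sub>R gradyF gy r2 (xopt X f r1 r2 y z v) y v)"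

definition normal_cone :: "'a::euclidean_space set \<Rightarrow> 'a \<Rightarrow> 'a set" where
  "normal_cone S x = (if x \<in> S then {g. \<forall>x'\<in>S. g \<bullet> (x' - x) \<le> 0} else {})"

definition eps_GS ::
  "'a::euclidean_space set \<Rightarrow> 'b::euclidean_space set \<Rightarrow> ('a \<Rightarrow> 'b \<Rightarrow> 'a) \<Rightarrow> ('a \<Rightarrow> 'b \<Rightarrow> 'b) \<Rightarrow>
   real \<Rightarrow> 'a \<Rightarrow> 'b \<Rightarrow> bool" where
  "eps_GS X Y gx gy \<epsilon> x y \<longleftrightarrow> x \<in> X \<and> y \<in> Y \<and>
     infdist 0 ((\<lambda>n. gx x y + n) ` normal_cone X x) \<le> \<epsilon> \<and>
     infdist 0 ((\<lambda>n. - gy x y + n) ` normal_cone Y y) \<le> \<epsilon>"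

end

theory Submission
  imports Defs
begin

lemma opt_cond:
  fixes f :: "'a::euclidean_space \<Rightarrow> 'b::euclidean_space \<Rightarrow> real"
  assumes C1: "C1_with_grads f gx gy" and cX: "convex X" and xs: "xs \<in> X" and w: "w \<in> X"
    and mn: "\<forall>x'\<in>X. Fdsgda f r1 r2 xs y z v \<le> Fdsgda f r1 r2 x' y z v"
  shows "gradxF gx r1 xs y z \<bullet> (w - xs) \<ge> 0"
proof (rule ccontr)
  assume neg: "\<not> ?thesis"
  define d where "d = w - xs"
  define g where "g s = Fdsgda f r1 r2 (xs + s *\<^sub>R d) y z v" for s :: real
  have geq: "g s = f (xs + s *\<^sub>R d) y + r1/2 * ((norm (xs - z))\<^sup>2 + 2 * s * ((xs - z) \<bullet> d) + s\<^sup>2 * (norm d)\<^sup>2)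
      - r2/2 * (norm (y - v))\<^sup>2" for s
  proof -
    have "(norm (xs + s *\<^sub>R d - z))\<^sup>2 = (norm (xs - z))\<^sup>2 + 2 * s * ((xs - z) \<bullet> d) + s\<^sup>2 * (norm d)\<^sup>2"
      unfolding power2_norm_eq_inner
      by (simp add: inner_add inner_diff inner_commute algebra_simps power2_eq_square)
    then show ?thesis unfolding g_def Fdsgda_def by simp
  qed
  have D0: "((\<lambda>p. f (fst p) (snd p)) has_derivative (\<lambda>h. gx xs y \<bullet> fst h + gy xs y \<bullet> snd h)) (at (xs, y))"
    using C1 unfolding C1_with_grads_def by blast
  have Din: "((\<lambda>s::real. (xs + s *\<^sub>R d, y)) has_derivative (\<lambda>h. (h *\<^sub>R d, 0))) (at 0)"
    by (auto intro!: derivative_eq_intros)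
  have "((\<lambda>p. f (fst p) (snd p)) \<circ> (\<lambda>s::real. (xs + s *\<^sub>R d, y)) has_derivative
      (\<lambda>h. gx xs y \<bullet> fst h + gy xs y \<bullet> snd h) \<circ> (\<lambda>h. (h *\<^sub>R d, 0))) (at 0)"
    by (rule diff_chain_at[OF Din]) (simp add: D0)
  then have Df: "((\<lambda>s. f (xs + s *\<^sub>R d) y) has_real_derivative (gx xs y \<bullet> d)) (at 0)"
    unfolding has_field_derivative_def o_def fst_conv snd_conv
    by (rule has_derivative_eq_rhs) (auto simp: fun_eq_iff)
  have "(g has_real_derivative (gx xs y \<bullet> d + r1/2 * (2 * ((xs - z) \<bullet> d)))) (at 0)"
    unfolding geq[abs_def]
    by (rule derivative_eq_intros Df refl | simp)+
  moreover have "gx xs y \<bullet> d + r1/2 * (2 * ((xs - z) \<bullet> d)) = gradxF gx r1 xs y z \<bullet> d"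
    by (simp add: gradxF_def inner_add_left)
  ultimately have Dg: "(g has_real_derivative gradxF gx r1 xs y z \<bullet> d) (at 0)" by simp
  have "gradxF gx r1 xs y z \<bullet> d < 0" using neg d_def by simp
  from DERIV_neg_dec_right[OF Dg this] obtain e where e: "e > 0" "\<forall>h>0. h < e \<longrightarrow> g 0 > g (0 + h)" by blast
  define h where "h = min (e/2) 1"
  have h: "h > 0" "h < e" "h \<le> 1" using e unfolding h_def by auto
  have "xs + h *\<^sub>R d = (1 - h) *\<^sub>R xs + h *\<^sub>R w" unfolding d_def by (simp add: algebra_simps)
  also have "\<dots> \<in> X" using convexD_alt[OF cX xs w] h by auto
  finally have "g 0 \<le> g h" using mn unfolding g_def by simp
  with e h show False by force
qed

lemma strong_mono:
  assumes L: "lipschitz_grads X Y gx gy Lx Ly" and a: "a \<in> X" and b: "b \<in> X" and y: "y \<in> Y"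
  shows "(gradxF gx r1 a y z - gradxF gx r1 b y z) \<bullet> (a - b) \<ge> (r1 - Lx) * (norm (a - b))\<^sup>2"
proof -
  have l: "norm (gx a y - gx b y) \<le> Lx * norm (a - b)"
    using L a b y unfolding lipschitz_grads_def by fastforce
  have "(gx a y - gx b y) \<bullet> (a - b) \<ge> - (norm (gx a y - gx b y) * norm (a - b))"
    using norm_cauchy_schwarz[of "-(gx a y - gx b y)" "a - b"] by (simp add: norm_minus_commute inner_diff_left)
  moreover have "norm (gx a y - gx b y) * norm (a - b) \<le> Lx * norm (a - b) * norm (a - b)"
    using l by (simp add: mult_right_mono)
  moreover have "(gradxF gx r1 a y z - gradxF gx r1 b y z) \<bullet> (a - b)
      = (gx a y - gx b y) \<bullet> (a - b) + r1 * (norm (a - b))\<^sup>2"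
    unfolding gradxF_def power2_norm_eq_inner by (simp add: algebra_simps inner_diff_left)
  ultimately show ?thesis by (simp add: power2_eq_square algebra_simps)
qed

lemma xopt_prop:
  fixes f :: "'a::euclidean_space \<Rightarrow> 'b::euclidean_space \<Rightarrow> real"
  assumes C1: "C1_with_grads f gx gy" and L: "lipschitz_grads X Y gx gy Lx Ly" and r: "r1 > Lx"
    and X: "X \<noteq> {}" "convex X" "compact X" and y: "y \<in> Y"
  shows "xopt X f r1 r2 y z v \<in> X \<and> (\<forall>x'\<in>X. Fdsgda f r1 r2 (xopt X f r1 r2 y z v) y z v \<le> Fdsgda f r1 r2 x' y z v)"
proof -
  have cf: "continuous (at x) (\<lambda>x. f x y)" for x
  proof -
    have "((\<lambda>p. f (fst p) (snd p)) has_derivative (\<lambda>h. gx x y \<bullet> fst h + gy x y \<bullet> snd h)) (at (x, y))"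
      using C1 unfolding C1_with_grads_def by blast
    then have c1: "continuous (at (x, y)) (\<lambda>p. f (fst p) (snd p))" by (rule has_derivative_continuous)
    have c2: "continuous (at x) (\<lambda>x. (x, y))" by (intro continuous_intros)
    show ?thesis using continuous_at_compose[OF c2, of "\<lambda>p. f (fst p) (snd p)"] c1 by (simp add: o_def)
  qed
  have "continuous_on X (\<lambda>x. Fdsgda f r1 r2 x y z v)"
    unfolding Fdsgda_def
    by (intro continuous_intros continuous_at_imp_continuous_on ballI cf)
  then obtain m where m: "m \<in> X" "\<forall>x'\<in>X. Fdsgda f r1 r2 m y z v \<le> Fdsgda f r1 r2 x' y z v"
    using continuous_attains_inf[OF X(3,1)] by blast
  have uniq: "a = m" if a: "a \<in> X" "\<forall>x'\<in>X. Fdsgda f r1 r2 a y z v \<le> Fdsgda f r1 r2 x' y z v" for a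
  proof -
    have 1: "gradxF gx r1 a y z \<bullet> (m - a) \<ge> 0" using opt_cond[OF C1 X(2) a(1) m(1) a(2)] .
    have 2: "gradxF gx r1 m y z \<bullet> (a - m) \<ge> 0" using opt_cond[OF C1 X(2) m(1) a(1) m(2)] .
    have "(gradxF gx r1 a y z - gradxF gx r1 m y z) \<bullet> (a - m) \<le> 0"
      using 1 2 by (simp add: inner_diff_left inner_diff_right inner_commute algebra_simps)
    with strong_mono[OF L a(1) m(1) y, of r1 z] have "(r1 - Lx) * (norm (a - m))\<^sup>2 \<le> 0" by linarith
    with r have "(norm (a - m))\<^sup>2 \<le> 0" by (simp add: mult_le_0_iff)
    then show ?thesis by simp
  qed
  have "\<exists>!x. x \<in> X \<and> (\<forall>x'\<in>X. Fdsgda f r1 r2 x y z v \<le> Fdsgda f r1 r2 x' y z v)"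
    using m uniq by blast
  from theI'[OF this] show ?thesis unfolding xopt_def .
qed


lemma err_bound:
  fixes f :: "'a::euclidean_space \<Rightarrow> 'b::euclidean_space \<Rightarrow> real"
  assumes C1: "C1_with_grads f gx gy" and L: "lipschitz_grads X Y gx gy Lx Ly" and r: "r1 > Lx" and Lx: "Lx > 0"
    and X: "X \<noteq> {}" "convex X" "compact X" and y: "y \<in> Y" and x: "x \<in> X" and c: "c > 0"
    and p: "p = closest_point X (x - c *\<^sub>R gradxF gx r1 x y z)"
  shows "norm (p - xopt X f r1 r2 y z v) \<le> (Lx + r1 + 1 / c) / (r1 - Lx) * norm (x - p)"
proof -
  define s where "s = xopt X f r1 r2 y z v"
  have s: "s \<in> X" "\<forall>x'\<in>X. Fdsgda f r1 r2 s y z v \<le> Fdsgda f r1 r2 x' y z v"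
    using xopt_prop[OF C1 L r X y] unfolding s_def by auto
  have clX: "closed X" using X(3) compact_imp_closed by blast
  have pX: "p \<in> X" using p closest_point_in_set[OF clX X(1)] by simp
  let ?G = "\<lambda>u. gradxF gx r1 u y z"
  have pr: "(x - c *\<^sub>R ?G x - p) \<bullet> (s - p) \<le> 0"
    using closest_point_dot[OF X(2) clX s(1)] p by simp
  have op: "?G s \<bullet> (p - s) \<ge> 0" using opt_cond[OF C1 X(2) s(1) pX s(2)] .
  have sm: "(?G p - ?G s) \<bullet> (p - s) \<ge> (r1 - Lx) * (norm (p - s))\<^sup>2"
    using strong_mono[OF L pX s(1) y] .
  have lg: "norm (?G p - ?G x) \<le> (Lx + r1) * norm (p - x)"
  proof -
    have l1: "norm (gx p y - gx x y) \<le> Lx * norm (p - x)"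
      using L pX x y unfolding lipschitz_grads_def by fastforce
    have e: "?G p - ?G x = (gx p y - gx x y) + r1 *\<^sub>R (p - x)"
      unfolding gradxF_def by (simp add: algebra_simps)
    have r1p: "r1 > 0" using r Lx by simp
    have l2: "norm (r1 *\<^sub>R (p - x)) = r1 * norm (p - x)" using r1p by (simp add: abs_of_pos)
    have "norm (?G p - ?G x) \<le> norm (gx p y - gx x y) + norm (r1 *\<^sub>R (p - x))"
      unfolding e by (rule norm_triangle_ineq)
    then have "norm (?G p - ?G x) \<le> Lx * norm (p - x) + r1 * norm (p - x)" using l1 l2 by linarith
    then show ?thesis by (simp add: distrib_right)
  qed
  have A: "(?G p - ?G x) \<bullet> (p - s) \<le> (Lx + r1) * norm (p - x) * norm (p - s)"
    using norm_cauchy_schwarz[of "?G p - ?G x" "p - s"] lg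
    using mult_right_mono[OF lg norm_ge_zero[of "p - s"]] by linarith
  have B: "c * (?G x \<bullet> (p - s)) \<le> norm (x - p) * norm (p - s)"
  proof -
    have "c * (?G x \<bullet> (p - s)) \<le> (x - p) \<bullet> (p - s)"
    proof -
      have "(x - c *\<^sub>R ?G x - p) \<bullet> (s - p) = - ((x - p) \<bullet> (p - s)) + c * (?G x \<bullet> (p - s))"
        by (simp add: inner_diff_left inner_diff_right inner_commute algebra_simps)
      with pr show ?thesis by linarith
    qed
    also have "\<dots> \<le> norm (x - p) * norm (p - s)" by (rule norm_cauchy_schwarz)
    finally show ?thesis .
  qed
  have B': "?G x \<bullet> (p - s) \<le> norm (x - p) * norm (p - s) / c"
    using B c by (simp add: pos_le_divide_eq mult.commute)
  have "(r1 - Lx) * (norm (p - s))\<^sup>2 \<le> (?G p - ?G x) \<bullet> (p - s) + ?G x \<bullet> (p - s)"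
    using sm op by (simp add: inner_diff_left)
  also have "\<dots> \<le> (Lx + r1) * norm (p - x) * norm (p - s) + norm (x - p) * norm (p - s) / c"
    using A B' by linarith
  also have "\<dots> = ((Lx + r1 + 1/c) * norm (x - p)) * norm (p - s)"
    by (simp add: norm_minus_commute distrib_right)
  finally have F1: "((r1 - Lx) * norm (p - s)) * norm (p - s) \<le> ((Lx + r1 + 1/c) * norm (x - p)) * norm (p - s)"
    by (simp add: power2_eq_square mult.assoc)
  have "(r1 - Lx) * norm (p - s) \<le> (Lx + r1 + 1/c) * norm (x - p)"
  proof (cases "norm (p - s) = 0")
    case True
    then show ?thesis using c r Lx by (simp add: zero_le_mult_iff add_pos_pos less_imp_le)
  next
    case False
    then have "norm (p - s) > 0" by simp
    with F1 show ?thesis using mult_le_cancel_right_pos by blast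
  qed
  then show ?thesis unfolding s_def[symmetric] using r by (simp add: pos_le_divide_eq mult.commute)
qed


lemma norm3: "norm (a - b + d) \<le> norm a + norm b + norm (d::'a::real_normed_vector)"
  by (metis add_right_mono norm_triangle_ineq norm_triangle_ineq4 order_trans)

lemma mem_seq:
  assumes "dsgda_seq X Y gx gy r1 r2 c \<alpha> \<beta> \<mu> xs ys zs vs" "xs 0 \<in> X" "ys 0 \<in> Y"
    "closed X" "X \<noteq> {}" "closed Y" "Y \<noteq> {}"
  shows "xs t \<in> X \<and> ys t \<in> Y"
proof (cases t)
  case 0 then show ?thesis using assms by simp
next
  case (Suc n)
  then show ?thesis using assms closest_point_in_set[of X] closest_point_in_set[of Y]
    unfolding dsgda_seq_def by metis
qed

theorem lemma8:
  fixes Lx Ly r1 r2 c \<alpha> \<beta> \<mu> :: real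
  assumes "Lx > 0" "Ly > 0" "r1 > Lx" "r2 > Ly" "c > 0" "\<alpha> > 0"
    "0 < \<beta>" "\<beta> < 1" "0 < \<mu>" "\<mu> < 1"
  shows "\<exists>\<rho>>0. \<forall>(X::'a::euclidean_space set) (Y::'b::euclidean_space set)
            (f::'a \<Rightarrow> 'b \<Rightarrow> real) gx gy xs ys zs vs.
     X \<noteq> {} \<and> convex X \<and> compact X \<and> Y \<noteq> {} \<and> convex Y \<and> compact Y \<and>
     C1_with_grads f gx gy \<and> lipschitz_grads X Y gx gy Lx Ly \<and>
     xs 0 \<in> X \<and> ys 0 \<in> Y \<and>
     dsgda_seq X Y gx gy r1 r2 c \<alpha> \<beta> \<mu> xs ys zs vs \<longrightarrow>
     (\<forall>\<epsilon>\<ge>0. \<forall>t.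
        max (max (norm (xs t - xs (Suc t)) / c)
                 (norm (ys t - yplus X Y f gy r1 r2 \<alpha> (ys t) (zs t) (vs t)) / \<alpha>))
            (max (norm (zs t - zs (Suc t)) / \<beta>) (norm (vs t - vs (Suc t)) / \<mu>)) \<le> \<epsilon>
        \<longrightarrow> eps_GS X Y gx gy (\<rho> * \<epsilon>) (xs (Suc t)) (ys (Suc t)))"
proof -
  note a = assms
  define Kc where "Kc = (Lx + r1 + 1 / c) / (r1 - Lx)"
  define K where "K = Kc * c"
  define Dy where "Dy = \<alpha> * (1 + Ly * K)"
  define \<rho> where "\<rho> = 2 + Lx * (c + Dy) + r1 * (c + 1) + Ly * Dy + r2 * (Dy + 1) + Dy / \<alpha>"
  have Kc0: "Kc \<ge> 0" unfolding Kc_def using a by simp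
  have K0: "K \<ge> 0" unfolding K_def using Kc0 a by simp
  have Dy0: "Dy \<ge> 0" unfolding Dy_def using K0 a by simp
  have t1: "Lx * (c + Dy) \<ge> 0" "r1 * (c + 1) \<ge> 0" "Ly * Dy \<ge> 0" "r2 * (Dy + 1) \<ge> 0" "Dy / \<alpha> \<ge> 0"
    using a Dy0 by auto
  have xb: "Lx * (c + Dy) + r1 * (c + 1) + 1 \<le> \<rho>" unfolding \<rho>_def using t1 by linarith
  have yb: "Ly * Dy + r2 * (Dy + 1) + Dy / \<alpha> \<le> \<rho>" unfolding \<rho>_def using t1 by linarith
  have \<rho>0: "\<rho> > 0" unfolding \<rho>_def using t1 by linarith
  show ?thesis
  proof (intro exI[of _ \<rho>] conjI allI impI \<rho>0)
    fix X :: "'a set" and Y :: "'b set" and f :: "'a \<Rightarrow> 'b \<Rightarrow> real" and gx gy xs ys zs vs \<epsilon> t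
    assume H: "X \<noteq> {} \<and> convex X \<and> compact X \<and> Y \<noteq> {} \<and> convex Y \<and> compact Y \<and>
     C1_with_grads f gx gy \<and> lipschitz_grads X Y gx gy Lx Ly \<and>
     xs 0 \<in> X \<and> ys 0 \<in> Y \<and> dsgda_seq X Y gx gy r1 r2 c \<alpha> \<beta> \<mu> xs ys zs vs"
      and e0: "\<epsilon> \<ge> 0"
      and M: "max (max (norm (xs t - xs (Suc t)) / c)
                 (norm (ys t - yplus X Y f gy r1 r2 \<alpha> (ys t) (zs t) (vs t)) / \<alpha>))
            (max (norm (zs t - zs (Suc t)) / \<beta>) (norm (vs t - vs (Suc t)) / \<mu>)) \<le> \<epsilon>"
    from H have X: "X \<noteq> {}" "convex X" "compact X" and Y: "Y \<noteq> {}" "convex Y" "compact Y"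
      and C1: "C1_with_grads f gx gy" and L: "lipschitz_grads X Y gx gy Lx Ly"
      and S: "dsgda_seq X Y gx gy r1 r2 c \<alpha> \<beta> \<mu> xs ys zs vs" and i0: "xs 0 \<in> X" "ys 0 \<in> Y" by auto
    have clX: "closed X" using X compact_imp_closed by blast
    have clY: "closed Y" using Y compact_imp_closed by blast
    define x0 where "x0 = xs t"
    define x1 where "x1 = xs (Suc t)"
    define y0 where "y0 = ys t"
    define y1 where "y1 = ys (Suc t)"
    define z0 where "z0 = zs t"
    define v0 where "v0 = vs t"
    define xo where "xo = xopt X f r1 r2 y0 z0 v0"
    define yp where "yp = yplus X Y f gy r1 r2 \<alpha> y0 z0 v0"
    have m0: "x0 \<in> X" "y0 \<in> Y" using mem_seq[OF S i0 clX X(1) clY Y(1), of t] x0_def y0_def by auto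
    have m1: "x1 \<in> X" "y1 \<in> Y" using mem_seq[OF S i0 clX X(1) clY Y(1), of "Suc t"] x1_def y1_def by auto
    have sx: "x1 = closest_point X (x0 - c *\<^sub>R gradxF gx r1 x0 y0 z0)"
      and sy: "y1 = closest_point Y (y0 + \<alpha> *\<^sub>R gradyF gy r2 x1 y0 v0)"
      and sz: "zs (Suc t) = z0 + \<beta> *\<^sub>R (x1 - z0)"
      and sv: "vs (Suc t) = v0 + \<mu> *\<^sub>R (y1 - v0)"
      using S unfolding dsgda_seq_def x0_def x1_def y0_def y1_def z0_def v0_def by auto
    have n1: "norm (x0 - x1) \<le> c * \<epsilon>"
      using M a unfolding x0_def x1_def by (simp add: pos_divide_le_eq mult.commute)
    have n2: "norm (y0 - yp) \<le> \<alpha> * \<epsilon>"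
      using M a unfolding y0_def yp_def z0_def v0_def by (simp add: pos_divide_le_eq mult.commute)
    have n3': "norm (z0 - zs (Suc t)) \<le> \<beta> * \<epsilon>"
      using M a unfolding z0_def by (simp add: pos_divide_le_eq mult.commute)
    have "norm (z0 - zs (Suc t)) = \<beta> * norm (x1 - z0)"
      unfolding sz using a by (simp add: norm_minus_commute)
    then have n3: "norm (x1 - z0) \<le> \<epsilon>" using n3' a by simp
    have n4': "norm (v0 - vs (Suc t)) \<le> \<mu> * \<epsilon>"
      using M a unfolding v0_def by (simp add: pos_divide_le_eq mult.commute)
    have "norm (v0 - vs (Suc t)) = \<mu> * norm (y1 - v0)"
      unfolding sv using a by (simp add: norm_minus_commute)
    then have n4: "norm (y1 - v0) \<le> \<epsilon>" using n4' a by simp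
    have exo: "norm (x1 - xo) \<le> K * \<epsilon>"
    proof -
      have "norm (x1 - xo) \<le> Kc * norm (x0 - x1)"
        using err_bound[OF C1 L a(3) a(1) X m0(2) m0(1) a(5) sx, of r2 v0] unfolding xo_def Kc_def .
      also have "\<dots> \<le> Kc * (c * \<epsilon>)" using n1 Kc0 by (rule mult_left_mono)
      finally show ?thesis unfolding K_def by (simp add: mult.assoc)
    qed
    have xoX: "xo \<in> X" using xopt_prop[OF C1 L a(3) X m0(2)] unfolding xo_def by blast
    have "norm (yp - y1) \<le> norm ((y0 + \<alpha> *\<^sub>R gradyF gy r2 xo y0 v0) - (y0 + \<alpha> *\<^sub>R gradyF gy r2 x1 y0 v0))"
      using closest_point_lipschitz[OF Y(2) clY Y(1)] unfolding yp_def yplus_def sy xo_def dist_norm .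
    also have "\<dots> = \<alpha> * norm (gy xo y0 - gy x1 y0)"
      using a by (simp add: gradyF_def scaleR_diff_right[symmetric])
    also have "\<dots> \<le> \<alpha> * (Ly * norm (xo - x1))"
    proof -
      have "norm (gy xo y0 - gy x1 y0) \<le> Ly * (norm (xo - x1) + norm (y0 - y0))"
        using L xoX m1(1) m0(2) unfolding lipschitz_grads_def by blast
      then show ?thesis using a by (intro mult_left_mono) auto
    qed
    also have "\<dots> \<le> \<alpha> * (Ly * (K * \<epsilon>))"
      using exo a by (intro mult_left_mono) (auto simp: norm_minus_commute)
    finally have n5: "norm (yp - y1) \<le> \<alpha> * (Ly * (K * \<epsilon>))" .
    have dy: "norm (y0 - y1) \<le> Dy * \<epsilon>"
    proof -
      have "norm (y0 - y1) \<le> norm (y0 - yp) + norm (yp - y1)" by (rule norm_diff_triangle_ineq[of y0 yp yp y1, simplified])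
      also have "\<dots> \<le> \<alpha> * \<epsilon> + \<alpha> * (Ly * (K * \<epsilon>))" using n2 n5 by linarith
      also have "\<dots> = Dy * \<epsilon>" unfolding Dy_def by (simp add: algebra_simps)
      finally show ?thesis .
    qed
    define N where "N = (1 / c) *\<^sub>R ((x0 - c *\<^sub>R gradxF gx r1 x0 y0 z0) - x1)"
    have NX: "N \<in> normal_cone X x1"
    proof -
      have "N \<bullet> (x' - x1) \<le> 0" if "x' \<in> X" for x'
        using closest_point_dot[OF X(2) clX that, of "x0 - c *\<^sub>R gradxF gx r1 x0 y0 z0"] a
        unfolding N_def sx[symmetric] by (simp add: divide_nonpos_pos)
      then show ?thesis unfolding normal_cone_def using m1 by auto
    qed
    have Neq: "gx x1 y1 + N = (gx x1 y1 - gx x0 y0) - r1 *\<^sub>R (x0 - z0) + (1 / c) *\<^sub>R (x0 - x1)"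
      unfolding N_def gradxF_def using a by (simp add: algebra_simps)
    have "norm (gx x1 y1 + N) \<le> norm (gx x1 y1 - gx x0 y0) + norm (r1 *\<^sub>R (x0 - z0)) + norm ((1 / c) *\<^sub>R (x0 - x1))"
      unfolding Neq by (rule norm3)
    also have "\<dots> \<le> Lx * (c * \<epsilon> + Dy * \<epsilon>) + r1 * (c * \<epsilon> + \<epsilon>) + \<epsilon>"
    proof -
      have "norm (gx x1 y1 - gx x0 y0) \<le> Lx * (norm (x1 - x0) + norm (y1 - y0))"
        using L m0 m1 unfolding lipschitz_grads_def by blast
      also have "\<dots> \<le> Lx * (c * \<epsilon> + Dy * \<epsilon>)"
        using n1 dy a by (intro mult_left_mono) (auto simp: norm_minus_commute)
      finally have 1: "norm (gx x1 y1 - gx x0 y0) \<le> Lx * (c * \<epsilon> + Dy * \<epsilon>)" .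
      have "norm (x0 - z0) \<le> norm (x0 - x1) + norm (x1 - z0)" by (rule norm_diff_triangle_ineq[of x0 x1 x1 z0, simplified])
      then have "norm (x0 - z0) \<le> c * \<epsilon> + \<epsilon>" using n1 n3 by linarith
      then have 2: "norm (r1 *\<^sub>R (x0 - z0)) \<le> r1 * (c * \<epsilon> + \<epsilon>)" using a by (simp add: mult_left_mono)
      have 3: "norm ((1 / c) *\<^sub>R (x0 - x1)) \<le> \<epsilon>" using n1 a by (simp add: divide_le_eq mult.commute)
      show ?thesis using 1 2 3 by linarith
    qed
    also have "\<dots> = (Lx * (c + Dy) + r1 * (c + 1) + 1) * \<epsilon>" by (simp add: algebra_simps)
    also have "\<dots> \<le> \<rho> * \<epsilon>" using xb e0 by (rule mult_right_mono)
    finally have GX: "norm (gx x1 y1 + N) \<le> \<rho> * \<epsilon>" .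
    define Mv where "Mv = (1 / \<alpha>) *\<^sub>R ((y0 + \<alpha> *\<^sub>R gradyF gy r2 x1 y0 v0) - y1)"
    have MY: "Mv \<in> normal_cone Y y1"
    proof -
      have "Mv \<bullet> (y' - y1) \<le> 0" if "y' \<in> Y" for y'
        using closest_point_dot[OF Y(2) clY that, of "y0 + \<alpha> *\<^sub>R gradyF gy r2 x1 y0 v0"] a
        unfolding Mv_def sy[symmetric] by (simp add: divide_nonpos_pos)
      then show ?thesis unfolding normal_cone_def using m1 by auto
    qed
    have Meq: "- gy x1 y1 + Mv = (gy x1 y0 - gy x1 y1) - r2 *\<^sub>R (y0 - v0) + (1 / \<alpha>) *\<^sub>R (y0 - y1)"
      unfolding Mv_def gradyF_def using a by (simp add: algebra_simps)
    have "norm (- gy x1 y1 + Mv) \<le> norm (gy x1 y0 - gy x1 y1) + norm (r2 *\<^sub>R (y0 - v0)) + norm ((1 / \<alpha>) *\<^sub>R (y0 - y1))"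
      unfolding Meq by (rule norm3)
    also have "\<dots> \<le> Ly * (Dy * \<epsilon>) + r2 * (Dy * \<epsilon> + \<epsilon>) + Dy * \<epsilon> / \<alpha>"
    proof -
      have "norm (gy x1 y0 - gy x1 y1) \<le> Ly * (norm (x1 - x1) + norm (y0 - y1))"
        using L m0 m1 unfolding lipschitz_grads_def by blast
      also have "\<dots> \<le> Ly * (Dy * \<epsilon>)"
        using dy a by (intro mult_left_mono) auto
      finally have 1: "norm (gy x1 y0 - gy x1 y1) \<le> Ly * (Dy * \<epsilon>)" .
      have "norm (y0 - v0) \<le> norm (y0 - y1) + norm (y1 - v0)" by (rule norm_diff_triangle_ineq[of y0 y1 y1 v0, simplified])
      then have "norm (y0 - v0) \<le> Dy * \<epsilon> + \<epsilon>" using dy n4 by linarith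
      then have 2: "norm (r2 *\<^sub>R (y0 - v0)) \<le> r2 * (Dy * \<epsilon> + \<epsilon>)" using a by (simp add: mult_left_mono)
      have 3: "norm ((1 / \<alpha>) *\<^sub>R (y0 - y1)) \<le> Dy * \<epsilon> / \<alpha>" using dy a by (simp add: divide_right_mono)
      show ?thesis using 1 2 3 by linarith
    qed
    also have "\<dots> = (Ly * Dy + r2 * (Dy + 1) + Dy / \<alpha>) * \<epsilon>" by (simp add: algebra_simps)
    also have "\<dots> \<le> \<rho> * \<epsilon>" using yb e0 by (rule mult_right_mono)
    finally have GY: "norm (- gy x1 y1 + Mv) \<le> \<rho> * \<epsilon>" .
    have "infdist 0 ((\<lambda>n. gx x1 y1 + n) ` normal_cone X x1) \<le> dist 0 (gx x1 y1 + N)"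
      using NX by (intro infdist_le imageI)
    then have 1: "infdist 0 ((\<lambda>n. gx x1 y1 + n) ` normal_cone X x1) \<le> \<rho> * \<epsilon>" using GX by simp
    have "infdist 0 ((\<lambda>n. - gy x1 y1 + n) ` normal_cone Y y1) \<le> dist 0 (- gy x1 y1 + Mv)"
      using MY by (intro infdist_le imageI)
    then have 2: "infdist 0 ((\<lambda>n. - gy x1 y1 + n) ` normal_cone Y y1) \<le> \<rho> * \<epsilon>" using GY by simp
    show "eps_GS X Y gx gy (\<rho> * \<epsilon>) (xs (Suc t)) (ys (Suc t))"
      unfolding eps_GS_def x1_def[symmetric] y1_def[symmetric] using 1 2 m1 by auto
  qed
qed

end
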